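(* Let $k\geq 1$ and let $T$ be a binary phylogenetic $X$-tree with $|X| = 2k$. If $\mathcal{P}=\{P_1,\ldots,P_k\}$ and $\mathcal{Q}=\{Q_1,\ldots,Q_k\}$ are both sets of $k$ pairwise edge-disjoint leaf-to-leaf paths in $T$, then $\mathcal{P}=\mathcal{Q}$; i.e., $T$ has exactly one set of $k$ pairwise edge-disjoint leaf-to-leaf paths.
   Context: A phylogenetic $X$-tree is a tree with no vertices of degree 2 whose leaves are bijectively labelled by (and identified with) $X$; binary means maximum degree 3. A leaf-to-leaf path is a path whose two endpoints are (distinct) leaves; paths are considered unordered (a path and its reverse are the same). *)

theory Defs
  imports Main
begin

definition simple_graph :: "'a set \<Rightarrow> 'a set set \<Rightarrow> bool" where
  "simple_graph V E \<longleftrightarrow> finite V \<and>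
     (\<forall>e\<in>E. \<exists>a b. a \<noteq> b \<and> a \<in> V \<and> b \<in> V \<and> e = {a, b})"

definition degree :: "'a set set \<Rightarrow> 'a \<Rightarrow> nat" where
  "degree E v = card {e\<in>E. v \<in> e}"

definition path_edges :: "'a list \<Rightarrow> 'a set set" where
  "path_edges ps = set (map (\<lambda>(a, b). {a, b}) (zip ps (tl ps)))"

definition is_path :: "'a set \<Rightarrow> 'a set set \<Rightarrow> 'a list \<Rightarrow> bool" where
  "is_path V E ps \<longleftrightarrow> ps \<noteq> [] \<and> distinct ps \<and> set ps \<subseteq> V \<and> path_edges ps \<subseteq> E"

definition is_cycle :: "'a set \<Rightarrow> 'a set set \<Rightarrow> 'a list \<Rightarrow> bool" where
  "is_cycle V E cs \<longleftrightarrow> length cs \<ge> 3 \<and> is_path V E cs \<and> {last cs, hd cs} \<in> E"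

definition connected_graph :: "'a set \<Rightarrow> 'a set set \<Rightarrow> bool" where
  "connected_graph V E \<longleftrightarrow>
     (\<forall>u\<in>V. \<forall>v\<in>V. \<exists>ps. is_path V E ps \<and> hd ps = u \<and> last ps = v)"

definition is_tree :: "'a set \<Rightarrow> 'a set set \<Rightarrow> bool" where
  "is_tree V E \<longleftrightarrow> simple_graph V E \<and> V \<noteq> {} \<and> connected_graph V E \<and>
     \<not> (\<exists>cs. is_cycle V E cs)"

(* leaves: vertices of degree at most 1 (degree 0 only occurs for the one-vertex tree) *)
definition leaves :: "'a set \<Rightarrow> 'a set set \<Rightarrow> 'a set" where
  "leaves V E = {v\<in>V. degree E v \<le> 1}"

(* phylogenetic X-tree: a tree without degree-2 vertices whose leaf set is X
   (leaves are identified with their labels) *)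
definition phylo_tree :: "'a set \<Rightarrow> 'a set \<Rightarrow> 'a set set \<Rightarrow> bool" where
  "phylo_tree X V E \<longleftrightarrow> is_tree V E \<and> (\<forall>v\<in>V. degree E v \<noteq> 2) \<and> leaves V E = X"

definition binary_phylo_tree :: "'a set \<Rightarrow> 'a set \<Rightarrow> 'a set set \<Rightarrow> bool" where
  "binary_phylo_tree X V E \<longleftrightarrow> phylo_tree X V E \<and> (\<forall>v\<in>V. degree E v \<le> 3)"

definition leaf_path_seq :: "'a set \<Rightarrow> 'a set set \<Rightarrow> 'a list \<Rightarrow> bool" where
  "leaf_path_seq V E ps \<longleftrightarrow> is_path V E ps \<and> hd ps \<noteq> last ps \<and>
     hd ps \<in> leaves V E \<and> last ps \<in> leaves V E"

(* unordered path: a path identified with its reverse *)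
definition upath :: "'a list \<Rightarrow> 'a list set" where
  "upath ps = {ps, rev ps}"

definition leaf_to_leaf_paths :: "'a set \<Rightarrow> 'a set set \<Rightarrow> 'a list set set" where
  "leaf_to_leaf_paths V E = {upath ps | ps. leaf_path_seq V E ps}"

definition upath_edges :: "'a list set \<Rightarrow> 'a set set" where
  "upath_edges P = (\<Union>ps\<in>P. path_edges ps)"

definition pairwise_edge_disjoint :: "'a list set set \<Rightarrow> bool" where
  "pairwise_edge_disjoint \<P> \<longleftrightarrow>
     (\<forall>P\<in>\<P>. \<forall>Q\<in>\<P>. P \<noteq> Q \<longrightarrow> upath_edges P \<inter> upath_edges Q = {})"

end

theory Submission
  imports Defs
begin

lemma pe_Nil[simp]: "path_edges [] = {}"
  and pe_single[simp]: "path_edges [a] = {}"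
  and pe_Cons2[simp]: "path_edges (a#b#xs) = insert {a,b} (path_edges (b#xs))"
  by (simp_all add: path_edges_def)

lemma pe_append: "xs \<noteq> [] \<Longrightarrow> ys \<noteq> [] \<Longrightarrow>
  path_edges (xs @ ys) = path_edges xs \<union> insert {last xs, hd ys} (path_edges ys)"
proof (induction xs rule: induct_list012)
  case 1 thus ?case by simp
next
  case (2 x) thus ?case by (cases ys) auto
next
  case (3 x y zs) thus ?case by auto
qed

lemma pe_rev: "path_edges (rev xs) = path_edges xs"
proof (induction xs rule: induct_list012)
  case (3 x y zs)
  have "path_edges (rev (x#y#zs)) = path_edges (rev (y#zs) @ [x])" by simp
  also have "\<dots> = path_edges (y#zs) \<union> {{y,x}}"
    using 3 by (subst pe_append) (auto simp: last_rev)
  finally show ?case by (auto simp: insert_commute)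
qed auto

lemma pe_subset: "e \<in> path_edges xs \<Longrightarrow> e \<subseteq> set xs"
  by (induction xs rule: induct_list012) auto

lemma pe_prefix: "path_edges xs \<subseteq> path_edges (xs @ ys)"
  by (cases "xs = [] \<or> ys = []") (auto simp: pe_append)

lemma star_path2:
  assumes "distinct ps" "v \<in> set ps" "v \<noteq> hd ps" "v \<noteq> last ps"
  shows "card {e \<in> path_edges ps. v \<in> e} = 2"
proof -
  obtain xs ys where ps: "ps = xs @ v # ys" using assms(2) split_list by metis
  have xs: "xs \<noteq> []" using assms(3) ps by auto
  have ys: "ys \<noteq> []" using assms(4) ps by auto
  then obtain b zs where ys': "ys = b # zs" by (cases ys) auto
  have nv: "v \<notin> set xs" "v \<notin> set ys" using assms(1) ps by auto
  have ne: "last xs \<noteq> b" "last xs \<noteq> v" "b \<noteq> v" using assms(1) ps xs ys' by auto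
  have pe: "path_edges ps = path_edges xs \<union> insert {last xs, v} (insert {v,b} (path_edges ys))"
    using ps xs ys' by (simp add: pe_append)
  have "{e \<in> path_edges ps. v \<in> e} = {{last xs, v}, {v, b}}"
    using pe nv pe_subset by (auto)
  moreover have "{last xs, v} \<noteq> {v, b}" using ne by (auto simp: doubleton_eq_iff)
  ultimately show ?thesis by simp
qed

lemma star_path0: "v \<notin> set ps \<Longrightarrow> {e \<in> path_edges ps. v \<in> e} = {}"
  using pe_subset by blast


lemma deg_ge: "finite U \<Longrightarrow> S \<subseteq> {e\<in>U. v\<in>e} \<Longrightarrow> card S \<le> degree U v"
  unfolding degree_def by (rule card_mono) auto

lemma forest_aux:
  assumes tree: "is_tree V E" and DE: "D \<subseteq> E" and fin: "finite D"
    and ev: "\<And>v. even (degree D v)"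
  shows "distinct ps \<Longrightarrow> set ps \<subseteq> V \<Longrightarrow> length ps \<ge> 2 \<Longrightarrow> path_edges ps \<subseteq> D \<Longrightarrow> False"
proof (induction "card V - length ps" arbitrary: ps rule: less_induct)
  case less
  have sg: "simple_graph V E" and nc: "\<not> (\<exists>cs. is_cycle V E cs)" and finV: "finite V"
    using tree by (auto simp: is_tree_def simple_graph_def)
  obtain u b rest where ps: "ps = u # b # rest" using less.prems(3)
    by (cases ps; cases "tl ps") auto
  have ub: "{u,b} \<in> D" using less.prems(4) ps by auto
  have "{e\<in>D. u\<in>e} \<noteq> {}" using ub by auto
  hence "degree D u \<noteq> 0" using fin by (simp add: degree_def)
  hence "degree D u \<ge> 2" using ev[of u] by presburger
  hence "\<not> {e\<in>D. u\<in>e} \<subseteq> {{u,b}}" unfolding degree_def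
    using card_mono[of "{{u,b}}" "{e\<in>D. u\<in>e}"] by auto
  then obtain e where e: "e \<in> D" "u \<in> e" "e \<noteq> {u,b}" by auto
  then obtain a c where ac: "a \<noteq> c" "a \<in> V" "c \<in> V" "e = {a,c}"
    using sg DE unfolding simple_graph_def by blast
  then obtain w where w: "e = {u,w}" "w \<noteq> u" "w \<in> V" using e(2) by auto
  have wb: "w \<noteq> b" using w e(3) by auto
  show False
  proof (cases "w \<in> set ps")
    case False
    have d: "distinct (w # ps)" using False less.prems(1) by simp
    have "length (w # ps) \<le> card V"
      using distinct_card[OF d] card_mono[OF finV, of "set (w#ps)"] less.prems(2) w(3) by simp
    hence lt: "card V - length (w # ps) < card V - length ps" by simp
    show False
      using less.hyps[OF lt d] less.prems w e(1) ps by (auto simp: insert_commute)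
  next
    case True
    hence "w \<in> set rest" using ps w wb by auto
    then obtain xs ys where r: "rest = xs @ w # ys" using split_list by metis
    define cs where "cs = u # b # xs @ [w]"
    have "ps = cs @ ys" using ps r cs_def by simp
    hence pe: "path_edges cs \<subseteq> D" using pe_prefix[of cs ys] less.prems(4) by auto
    have "is_cycle V E cs"
      unfolding is_cycle_def is_path_def
      using pe DE less.prems(1,2) ps r e(1) w(1) unfolding cs_def by (auto simp: insert_commute)
    thus False using nc by blast
  qed
qed

lemma forest_even:
  assumes "is_tree V E" "D \<subseteq> E" "finite D" "\<And>v. even (degree D v)"
  shows "D = {}"
proof (rule ccontr)
  assume "D \<noteq> {}"
  then obtain e where "e \<in> D" by auto
  moreover have sg: "simple_graph V E" using assms(1) by (auto simp: is_tree_def)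
  ultimately obtain a c where "a \<noteq> c" "a \<in> V" "c \<in> V" "e = {a,c}"
    using assms(2) unfolding simple_graph_def by blast
  thus False using forest_aux[OF assms, of "[a,c]"] \<open>e \<in> D\<close> by auto
qed

lemma walk_prev:
  assumes fin: "finite U" and deg: "\<And>v. degree U v \<le> 2"
  shows "p \<noteq> [] \<Longrightarrow> q \<noteq> [] \<Longrightarrow> hd p = hd q \<Longrightarrow> distinct p \<Longrightarrow> distinct q \<Longrightarrow>
    path_edges p \<subseteq> U \<Longrightarrow> path_edges q \<subseteq> U \<Longrightarrow> {c, hd p} \<in> U \<Longrightarrow> c \<notin> set p \<Longrightarrow> c \<notin> set q \<Longrightarrow>
    degree U (last p) = 1 \<Longrightarrow> degree U (last q) = 1 \<Longrightarrow> p = q"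
proof (induction p arbitrary: q c)
  case Nil thus ?case by simp
next
  case (Cons a p')
  obtain q' where q: "q = a # q'" using Cons.prems(2,3) by (cases q) auto
  show ?case
  proof (cases p')
    case Nil
    show ?thesis
    proof (cases q')
      case (Cons b' q'')
      have "card {{c,a},{a,b'}} \<le> degree U a"
        using Cons.prems q \<open>q' = b' # q''\<close> by (intro deg_ge[OF fin]) auto
      moreover have "card {{c,a},{a,b'}} = 2" using Cons.prems q \<open>q' = b' # q''\<close>
        by (auto simp: doubleton_eq_iff)
      ultimately show ?thesis using Cons.prems(11) \<open>p' = []\<close> by simp
    qed (use q Nil in simp)
  next
    case (Cons b p'')
    note pC = this
    show ?thesis
    proof (cases q')
      case Nil
      have "card {{c,a},{a,b}} \<le> degree U a"
        using Cons.prems q pC by (intro deg_ge[OF fin]) auto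
      moreover have "card {{c,a},{a,b}} = 2" using Cons.prems q pC
        by (auto simp: doubleton_eq_iff)
      ultimately show ?thesis using Cons.prems(12) q Nil by simp
    next
      case (Cons b' q'')
      note qC = this
      have bb: "b = b'"
      proof (rule ccontr)
        assume nb: "b \<noteq> b'"
        have "card {{c,a},{a,b},{a,b'}} \<le> degree U a"
          using Cons.prems q pC qC by (intro deg_ge[OF fin]) auto
        moreover have "card {{c,a},{a,b},{a,b'}} = 3" using Cons.prems q pC qC nb
          by (auto simp: doubleton_eq_iff)
        ultimately show False using deg[of a] by simp
      qed
      have "p' = q'"
        using Cons.IH[of q' a] Cons.prems q pC qC bb by auto
      thus ?thesis using q by simp
    qed
  qed
qed

lemma walk:
  assumes fin: "finite U" and deg: "\<And>v. degree U v \<le> 2"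
    and "length p \<ge> 2" "length q \<ge> 2" "hd p = hd q" "distinct p" "distinct q"
    "path_edges p \<subseteq> U" "path_edges q \<subseteq> U" "degree U (hd p) = 1"
    "degree U (last p) = 1" "degree U (last q) = 1"
  shows "p = q"
proof -
  obtain x b p' where p: "p = x # b # p'" using assms(3) by (cases p; cases "tl p") auto
  obtain b' q' where q: "q = x # b' # q'" using assms(4,5) p by (cases q; cases "tl q") auto
  have bb: "b = b'"
  proof (rule ccontr)
    assume nb: "b \<noteq> b'"
    have "card {{x,b},{x,b'}} \<le> degree U x"
      using assms p q by (intro deg_ge[OF fin]) auto
    moreover have "card {{x,b},{x,b'}} = 2" using nb by (auto simp: doubleton_eq_iff)
    ultimately show False using assms(10) p by simp
  qed
  have "b # p' = b # q'"
    using walk_prev[OF fin deg, of "b # p'" "b # q'" x] assms p q bb by auto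
  thus ?thesis using p q bb by simp
qed


lemma upath_edges_upath: "upath_edges (upath ps) = path_edges ps"
  by (simp add: upath_edges_def upath_def pe_rev)

lemma upath_rev: "upath (rev ps) = upath ps"
  by (auto simp: upath_def)

lemma leaf_path_rev: "leaf_path_seq V E ps \<Longrightarrow> leaf_path_seq V E (rev ps)"
  by (auto simp: leaf_path_seq_def is_path_def pe_rev hd_rev last_rev)

lemma leaf_path_len: "leaf_path_seq V E ps \<Longrightarrow> length ps \<ge> 2"
  by (cases ps; cases "tl ps") (auto simp: leaf_path_seq_def is_path_def)

lemma finE: "simple_graph V E \<Longrightarrow> finite E"
proof -
  assume sg: "simple_graph V E"
  have sub: "E \<subseteq> Pow V" using sg unfolding simple_graph_def by auto
  have "finite V" using sg by (simp add: simple_graph_def)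
  thus "finite E" using sub by (meson finite_Pow_iff finite_subset)
qed

lemma leaf_edge:
  assumes "simple_graph V E" "x \<in> leaves V E" "{x,b} \<in> E" "{x,b'} \<in> E"
  shows "{x,b} = {x,b'}"
proof -
  have c: "card {e\<in>E. x\<in>e} \<le> Suc 0" using assms(2) by (simp add: leaves_def degree_def)
  have f: "finite {e\<in>E. x\<in>e}" using finE[OF assms(1)] by simp
  have "\<forall>a1\<in>{e\<in>E. x\<in>e}. \<forall>a2\<in>{e\<in>E. x\<in>e}. a1 = a2"
    using c card_le_Suc0_iff_eq[OF f] by simp
  thus ?thesis using assms(3,4) by simp
qed

lemma fam:
  assumes bp: "binary_phylo_tree X V E" and cX: "card X = 2*k" and k: "k \<ge> 1"
    and Psub: "\<P> \<subseteq> leaf_to_leaf_paths V E" and cP: "card \<P> = k"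
    and disj: "pairwise_edge_disjoint \<P>"
  shows "\<Union>(upath_edges ` \<P>) \<subseteq> E"
    and "\<forall>P\<in>\<P>. \<forall>ps\<in>P. leaf_path_seq V E ps \<and> P = upath ps"
    and "\<forall>x\<in>X. \<exists>P\<in>\<P>. \<exists>ps\<in>P. hd ps = x"
    and "\<forall>v. v \<notin> X \<longrightarrow> even (degree (\<Union>(upath_edges ` \<P>)) v)"
proof -
  have sg: "simple_graph V E" and lv: "leaves V E = X"
    using bp by (auto simp: binary_phylo_tree_def phylo_tree_def is_tree_def)
  have rep: "\<exists>ps0. P = upath ps0 \<and> leaf_path_seq V E ps0" if "P \<in> \<P>" for P
    using Psub that by (auto simp: leaf_to_leaf_paths_def)
  show B: "\<forall>P\<in>\<P>. \<forall>ps\<in>P. leaf_path_seq V E ps \<and> P = upath ps"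
  proof (intro ballI)
    fix P ps assume P: "P \<in> \<P>" and ps: "ps \<in> P"
    obtain ps0 where p0: "P = upath ps0" "leaf_path_seq V E ps0" using rep[OF P] by blast
    have "ps = ps0 \<or> ps = rev ps0" using ps p0 by (auto simp: upath_def)
    thus "leaf_path_seq V E ps \<and> P = upath ps"
    proof
      assume "ps = ps0" thus ?thesis using p0 by simp
    next
      assume "ps = rev ps0" thus ?thesis using p0 leaf_path_rev[OF p0(2)] upath_rev[of ps0] by simp
    qed
  qed
  show "\<Union>(upath_edges ` \<P>) \<subseteq> E"
    using B by (auto simp: upath_edges_def leaf_path_seq_def is_path_def)
  have finP: "finite \<P>" by (rule card_ge_0_finite) (use cP k in simp)
  have finX: "finite X" by (rule card_ge_0_finite) (use cX k in simp)
  define H where "H P = hd ` P" for P :: "'a list set"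
  have HP: "H P \<subseteq> X \<and> card (H P) = 2" if PP: "P \<in> \<P>" for P
  proof -
    obtain ps0 where p0: "P = upath ps0" "leaf_path_seq V E ps0" using rep[OF PP] by blast
    have ne: "ps0 \<noteq> []" using p0(2) by (auto simp: leaf_path_seq_def is_path_def)
    have "H P = {hd ps0, last ps0}" using p0 ne by (auto simp: H_def upath_def hd_rev)
    thus ?thesis using p0(2) lv by (auto simp: leaf_path_seq_def)
  qed
  have Hdisj: "H P \<inter> H Q = {}" if "P \<in> \<P>" "Q \<in> \<P>" "P \<noteq> Q" for P Q
  proof (rule ccontr)
    assume "H P \<inter> H Q \<noteq> {}"
    then obtain ps qs where ps: "ps \<in> P" and qs: "qs \<in> Q" and h: "hd ps = hd qs"
      by (auto simp: H_def)
    have lp: "leaf_path_seq V E ps" "leaf_path_seq V E qs" using B that ps qs by auto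
    obtain x b ps' where ps': "ps = x # b # ps'" using leaf_path_len[OF lp(1)]
      by (cases ps; cases "tl ps") auto
    obtain b' qs' where qs': "qs = x # b' # qs'" using leaf_path_len[OF lp(2)] h ps'
      by (cases qs; cases "tl qs") auto
    have e1: "{x,b} \<in> E" "{x,b'} \<in> E" using lp ps' qs'
      by (auto simp: leaf_path_seq_def is_path_def)
    have xl: "x \<in> leaves V E" using lp(1) ps' by (auto simp: leaf_path_seq_def)
    have eq: "{x,b} = {x,b'}" using leaf_edge[OF sg xl e1] .
    have "{x,b} \<in> upath_edges P" unfolding upath_edges_def using ps ps' by (intro UN_I[of ps]) auto
    moreover have "{x,b} \<in> upath_edges Q" unfolding upath_edges_def using qs qs' eq by (intro UN_I[of qs]) auto
    moreover have "upath_edges P \<inter> upath_edges Q = {}"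
      using disj that unfolding pairwise_edge_disjoint_def by blast
    ultimately show False by blast
  qed
  have finH: "finite (H P)" if "P \<in> \<P>" for P by (rule finite_subset[OF conjunct1[OF HP[OF that]] finX])
  have "card (\<Union>(H ` \<P>)) = (\<Sum>P\<in>\<P>. card (H P))"
    by (rule card_UN_disjoint[OF finP]) (use finH Hdisj in auto)
  also have "\<dots> = 2 * k" using HP cP by simp
  finally have cU: "card (\<Union>(H ` \<P>)) = card X" using cX by simp
  have sub: "\<Union>(H ` \<P>) \<subseteq> X" using HP by blast
  have "\<Union>(H ` \<P>) = X" using card_subset_eq[OF finX sub cU] .
  thus "\<forall>x\<in>X. \<exists>P\<in>\<P>. \<exists>ps\<in>P. hd ps = x" by (auto simp: H_def)
  show "\<forall>v. v \<notin> X \<longrightarrow> even (degree (\<Union>(upath_edges ` \<P>)) v)"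
  proof (intro allI impI)
    fix v assume vX: "v \<notin> X"
    define S where "S P = {e \<in> upath_edges P. v \<in> e}" for P
    have eqS: "{e \<in> \<Union>(upath_edges ` \<P>). v \<in> e} = \<Union>(S ` \<P>)" by (auto simp: S_def)
    have finS: "finite (S P)" if PP: "P \<in> \<P>" for P
    proof -
      obtain ps0 where p0: "P = upath ps0" "leaf_path_seq V E ps0" using rep[OF PP] by blast
      show ?thesis using p0 by (simp add: S_def upath_edges_upath path_edges_def)
    qed
    have Sdisj: "\<forall>P\<in>\<P>. \<forall>Q\<in>\<P>. P \<noteq> Q \<longrightarrow> S P \<inter> S Q = {}"
      using disj unfolding pairwise_edge_disjoint_def S_def by auto
    have evS: "even (card (S P))" if PP: "P \<in> \<P>" for P
    proof -
      obtain ps0 where p0: "P = upath ps0" "leaf_path_seq V E ps0" using rep[OF PP] by blast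
      have SP: "S P = {e \<in> path_edges ps0. v \<in> e}" using p0 by (simp add: S_def upath_edges_upath)
      show ?thesis
      proof (cases "v \<in> set ps0")
        case True
        have "v \<noteq> hd ps0" "v \<noteq> last ps0" using p0(2) vX lv by (auto simp: leaf_path_seq_def)
        moreover have "distinct ps0" using p0(2) by (simp add: leaf_path_seq_def is_path_def)
        ultimately show ?thesis using star_path2[of ps0 v] True SP by simp
      next
        case False
        have "S P = {}" by (rule trans[OF SP star_path0[OF False]])
        thus ?thesis by simp
      qed
    qed
    have "degree (\<Union>(upath_edges ` \<P>)) v = (\<Sum>P\<in>\<P>. card (S P))"
      unfolding degree_def eqS by (rule card_UN_disjoint[OF finP]) (use finS Sdisj in auto)
    moreover have "even (\<Sum>P\<in>\<P>. card (S P))" by (rule dvd_sum) (use evS in blast)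
    ultimately show "even (degree (\<Union>(upath_edges ` \<P>)) v)" by simp
  qed
qed


lemma fam2:
  assumes bp: "binary_phylo_tree X V E" and cX: "card X = 2*k" and k: "k \<ge> 1"
    and Psub: "\<P> \<subseteq> leaf_to_leaf_paths V E" and cP: "card \<P> = k"
    and disj: "pairwise_edge_disjoint \<P>"
  defines "U \<equiv> \<Union>(upath_edges ` \<P>)"
  shows "finite U" "U \<subseteq> E"
    and "\<forall>x\<in>X. {e\<in>U. x\<in>e} = {e\<in>E. x\<in>e}"
    and "\<forall>x\<in>X. degree U x = 1"
    and "\<forall>v. degree U v \<le> 2"
    and "\<forall>v. v \<notin> X \<longrightarrow> even (degree U v)"
proof -
  note f = fam[OF assms(1-6), folded U_def]
  have sg: "simple_graph V E" and lv: "leaves V E = X" and b3: "\<forall>v\<in>V. degree E v \<le> 3"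
    using bp by (auto simp: binary_phylo_tree_def phylo_tree_def is_tree_def)
  have finE': "finite E" using finE[OF sg] .
  show UE: "U \<subseteq> E" using f(1) .
  show finU: "finite U" using finite_subset[OF UE finE'] .
  have st: "{e\<in>U. x\<in>e} = {e\<in>E. x\<in>e} \<and> degree U x = 1" if xX: "x \<in> X" for x
  proof -
    have ex: "\<exists>P\<in>\<P>. \<exists>ps\<in>P. hd ps = x" using f(3) xX by simp
    then obtain P ps where P: "P \<in> \<P>" "ps \<in> P" "hd ps = x" by blast
    have lp: "leaf_path_seq V E ps" using conjunct1[OF bspec[OF bspec[OF f(2) P(1)] P(2)]] .
    obtain b ps' where ps': "ps = x # b # ps'" using leaf_path_len[OF lp] P(3)
      by (cases ps; cases "tl ps") auto
    have "{x,b} \<in> path_edges ps" using ps' by simp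
    moreover have "path_edges ps \<subseteq> upath_edges P" unfolding upath_edges_def using P(2) by (rule UN_upper)
    moreover have "upath_edges P \<subseteq> U" unfolding U_def using P(1) by (rule UN_upper)
    ultimately have xbU: "{x,b} \<in> U" by blast
    have xl: "x \<in> leaves V E" using lv xX by simp
    have eqb: "e = {x,b}" if eE: "e \<in> E" and xe: "x \<in> e" for e
    proof -
      have "\<exists>a c. a \<noteq> c \<and> a \<in> V \<and> c \<in> V \<and> e = {a,c}"
        using bspec[OF conjunct2[OF sg[unfolded simple_graph_def]] eE] .
      then obtain a c where "e = {a,c}" by blast
      then obtain w where w: "e = {x,w}" using xe by auto
      have e1: "{x,w} \<in> E" using eE w by simp
      have e2: "{x,b} \<in> E" using xbU UE by blast
      show ?thesis using leaf_edge[OF sg xl e2 e1] w by simp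
    qed
    have "{e\<in>E. x\<in>e} = {{x,b}}" using xbU UE by (auto dest: eqb)
    moreover have "{e\<in>U. x\<in>e} = {{x,b}}" using xbU UE by (auto dest: eqb)
    ultimately show ?thesis by (simp add: degree_def)
  qed
  show "\<forall>x\<in>X. {e\<in>U. x\<in>e} = {e\<in>E. x\<in>e}" using st by blast
  show "\<forall>x\<in>X. degree U x = 1" using st by blast
  show ev: "\<forall>v. v \<notin> X \<longrightarrow> even (degree U v)" using f(4) .
  show "\<forall>v. degree U v \<le> 2"
  proof
    fix v
    show "degree U v \<le> 2"
    proof (cases "v \<in> X")
      case True thus ?thesis using st by simp
    next
      case False
      have "degree U v \<le> degree E v" unfolding degree_def
        by (rule card_mono) (use finE' UE in auto)
      moreover have "degree E v \<le> 3"
      proof (cases "v \<in> V")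
        case True thus ?thesis using b3 by simp
      next
        case nV: False
        have sub: "\<forall>e\<in>E. e \<subseteq> V" using sg unfolding simple_graph_def by fastforce
        have em: "{e\<in>E. v\<in>e} = {}" using sub nV by auto
        show ?thesis unfolding degree_def em by simp
      qed
      moreover have "degree U v \<noteq> 3" using ev False by fastforce
      ultimately show ?thesis by linarith
    qed
  qed
qed


lemma incl:
  assumes bp: "binary_phylo_tree X V E" and cX: "card X = 2*k" and k: "k \<ge> 1"
    and P1: "\<P> \<subseteq> leaf_to_leaf_paths V E" and P2: "card \<P> = k" and P3: "pairwise_edge_disjoint \<P>"
    and Q1: "\<Q> \<subseteq> leaf_to_leaf_paths V E" and Q2: "card \<Q> = k" and Q3: "pairwise_edge_disjoint \<Q>"
    and UU: "\<Union>(upath_edges ` \<P>) = \<Union>(upath_edges ` \<Q>)"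
  shows "\<P> \<subseteq> \<Q>"
proof
  fix P assume P: "P \<in> \<P>"
  note fP = fam[OF bp cX k P1 P2 P3]
  note fQ = fam[OF bp cX k Q1 Q2 Q3]
  note gP = fam2[OF bp cX k P1 P2 P3]
  have lv: "leaves V E = X"
    using bp by (simp add: binary_phylo_tree_def phylo_tree_def)
  obtain ps where ps: "P = upath ps" "leaf_path_seq V E ps" using P P1 by (auto simp: leaf_to_leaf_paths_def)
  have psP: "ps \<in> P" using ps(1) by (simp add: upath_def)
  have hX: "hd ps \<in> X" and lX: "last ps \<in> X" using ps(2) lv by (auto simp: leaf_path_seq_def)
  have ex: "\<exists>Q\<in>\<Q>. \<exists>qs\<in>Q. hd qs = hd ps" using fQ(3) hX by simp
  then obtain Q qs where Q: "Q \<in> \<Q>" "qs \<in> Q" "hd qs = hd ps" by blast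
  have qQ: "leaf_path_seq V E qs \<and> Q = upath qs" using bspec[OF bspec[OF fQ(2) Q(1)] Q(2)] .
  have lqX: "last qs \<in> X" using qQ lv by (auto simp: leaf_path_seq_def)
  have pe1: "path_edges ps \<subseteq> \<Union>(upath_edges ` \<P>)"
    using psP P unfolding upath_edges_def by blast
  have pe2: "path_edges qs \<subseteq> \<Union>(upath_edges ` \<P>)"
    unfolding UU using Q unfolding upath_edges_def by blast
  have "ps = qs"
  proof (rule walk[OF gP(1)])
    show "\<And>v. degree (\<Union>(upath_edges ` \<P>)) v \<le> 2" using gP(5) by blast
    show "2 \<le> length ps" using leaf_path_len[OF ps(2)] .
    show "2 \<le> length qs" using leaf_path_len qQ by blast
    show "hd ps = hd qs" using Q(3) by simp
    show "distinct ps" using ps(2) by (simp add: leaf_path_seq_def is_path_def)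
    show "distinct qs" using qQ by (simp add: leaf_path_seq_def is_path_def)
    show "path_edges ps \<subseteq> \<Union>(upath_edges ` \<P>)" by (rule pe1)
    show "path_edges qs \<subseteq> \<Union>(upath_edges ` \<P>)" by (rule pe2)
    show "degree (\<Union>(upath_edges ` \<P>)) (hd ps) = 1" using gP(4) hX by blast
    show "degree (\<Union>(upath_edges ` \<P>)) (last ps) = 1" using gP(4) lX by blast
    show "degree (\<Union>(upath_edges ` \<P>)) (last qs) = 1" using gP(4) lqX by blast
  qed
  hence "P = Q" using ps(1) qQ by simp
  thus "P \<in> \<Q>" using Q(1) by simp
qed

lemma sym_even:
  assumes "finite A" "finite B" "even (card A)" "even (card B)"
  shows "even (card ((A - B) \<union> (B - A)))"
proof -
  have "card ((A - B) \<union> (B - A)) = card (A - B) + card (B - A)"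
    by (rule card_Un_disjoint) (use assms in auto)
  also have "card (A - B) = card A - card (A \<inter> B)" using assms by (simp add: card_Diff_subset_Int)
  also have "card (B - A) = card B - card (A \<inter> B)" using assms
    by (simp add: card_Diff_subset_Int Int_commute)
  finally have eq: "card ((A - B) \<union> (B - A)) = card A - card (A \<inter> B) + (card B - card (A \<inter> B))" .
  have "card (A \<inter> B) \<le> card A" "card (A \<inter> B) \<le> card B"
    using assms by (auto intro: card_mono)
  thus ?thesis using eq assms(3,4) by presburger
qed

theorem lemma7:
  fixes X V :: "'a set" and E :: "'a set set" and k :: nat
    and \<P> \<Q> :: "'a list set set"
  assumes "k \<ge> 1"
    and "binary_phylo_tree X V E"
    and "card X = 2 * k"
    and "\<P> \<subseteq> leaf_to_leaf_paths V E" and "card \<P> = k" and "pairwise_edge_disjoint \<P>"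
    and "\<Q> \<subseteq> leaf_to_leaf_paths V E" and "card \<Q> = k" and "pairwise_edge_disjoint \<Q>"
  shows "\<P> = \<Q>"
proof -
  define UP where "UP = \<Union>(upath_edges ` \<P>)"
  define UQ where "UQ = \<Union>(upath_edges ` \<Q>)"
  note gP = fam2[OF assms(2,3,1,4,5,6), folded UP_def]
  note gQ = fam2[OF assms(2,3,1,7,8,9), folded UQ_def]
  have tree: "is_tree V E" using assms(2) by (simp add: binary_phylo_tree_def phylo_tree_def)
  define D where "D = (UP - UQ) \<union> (UQ - UP)"
  have DE: "D \<subseteq> E" using gP(2) gQ(2) unfolding D_def by blast
  have finD: "finite D" using gP(1) gQ(1) unfolding D_def by blast
  have evD: "even (degree D v)" for v
  proof -
    have eq: "{e\<in>D. v\<in>e} = ({e\<in>UP. v\<in>e} - {e\<in>UQ. v\<in>e}) \<union> ({e\<in>UQ. v\<in>e} - {e\<in>UP. v\<in>e})"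
      unfolding D_def by blast
    show ?thesis
    proof (cases "v \<in> X")
      case True
      have "{e\<in>UP. v\<in>e} = {e\<in>UQ. v\<in>e}" using gP(3) gQ(3) True by simp
      thus ?thesis unfolding degree_def eq by simp
    next
      case False
      have "even (card {e\<in>UP. v\<in>e})" using gP(6) False by (simp add: degree_def)
      moreover have "even (card {e\<in>UQ. v\<in>e})" using gQ(6) False by (simp add: degree_def)
      ultimately show ?thesis unfolding degree_def eq
        by (intro sym_even) (use gP(1) gQ(1) in auto)
    qed
  qed
  have "D = {}" by (rule forest_even[OF tree DE finD evD])
  hence UU: "UP = UQ" unfolding D_def by blast
  show ?thesis
  proof
    show "\<P> \<subseteq> \<Q>" using incl[OF assms(2,3,1,4,5,6,7,8,9)] UU UP_def UQ_def by simp
    show "\<Q> \<subseteq> \<P>" using incl[OF assms(2,3,1,7,8,9,4,5,6)] UU UP_def UQ_def by simp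
  qed
qed

end
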